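(* Let $\xi$ be a DoS sequence that is not an edge case, let $\mathscr{L}$ be a symmetric irreducible graph Laplacian with largest eigenvalue $\lambda_N(\mathscr{L})$, and let $t_1=0$, $t_{k+1}=t_k+\Delta_k$, where $\Delta_k=\Delta_0$ if $t_k\in[0,h_1+\tau_1)$, with $\Delta_0>0$ satisfying $\lvert1-\Delta_0\lambda_N(\mathscr{L})\rvert<1$, and $\Delta_k=\min\{\Delta_0,\ (1-\hat B_d(h_n+\tau_n))/(\gamma_1\hat B_f(h_n))\}$ if $t_k\in[h_n+\tau_n,h_{n+1}+\tau_{n+1})$, $n\in\mathbb{N}_+$, with $\gamma_1>1$ and $\hat B_d,\hat B_f$ generated by the DoS estimator. Then there exist a finite $\check t\geqslant 0$, constants $\underline{\Delta}$ and $\bar\Delta$, a duration-bound $B_d$ and a frequency-bound $B_f$ of $\xi$ such that $0<\underline{\Delta}\leqslant\Delta_k<+\infty$ for all $t_k\geqslant 0$, $\Delta_k\leqslant\bar\Delta$ for all $t_k\geqslant\check t$, $\lvert1-\bar\Delta\lambda_N(\mathscr{L})\rvert<1$, and $B_d+B_f\bar\Delta<1$.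
   Context: A DoS sequence $\xi=\{H_n\}$ is a finite or infinite sequence of sets $H_n := \{h_n\}\cup[h_n,h_n+\tau_n)$, where $h_1\geqslant 0$, $\tau_n\geqslant 0$ and $h_{n+1} > h_n+\tau_n$ for all $n$. If $\xi$ has only $m$ elements, the convention $h_{n}=h_{n}+\tau_{n}=+\infty$ for $n>m$ is used. For $0\leqslant \tau\leqslant s$ let $\Xi(\tau,s) := \bigcup_n H_n\cap[\tau,s]$ and $n_\xi(\tau,s) := \operatorname{card}(\{h_n\}_n\cap[\tau,s])$; $\lvert\cdot\rvert$ is Lebesgue measure. A constant $B_d\in[0,1]$ is a duration-bound of $\xi$ if there is $0<\kappa<+\infty$ with $\lvert \Xi(0,t)\rvert\leqslant \kappa + B_d t$ for all $t\geqslant 0$. A constant $B_f\in[0,+\infty)$ is a frequency-bound of $\xi$ if there is an integer $0<\Lambda<+\infty$ with $n_\xi(0,t)\leqslant \Lambda + B_f t$ for all $t\geqslant 0$; if no such finite $B_f$ exists, the frequency-bound is $+\infty$. $\mathcal{D}(\xi)$, $\mathcal{F}(\xi)$ are the sets of duration- and frequency-bounds. $\xi$ is an edge case if (i) $\inf\mathcal{D}(\xi)=1$, or (ii) $\inf\mathcal{F}(\xi)=+\infty$, or (iii) for every $\Gamma>0$ there is $n$ with $\tau_n>\Gamma$. DoS estimator (parameters $2\leqslant\ell\in\mathbb{N}_+$, $0<\epsilon_0<1$, $0<\theta<1$): with $B_d(i) := \frac{\lvert \Xi(0,h_i+\tau_i)\rvert}{h_i+\tau_i}$ and $B_f(i)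 := \frac{i}{h_i}$, $\hat B_d(t) = \epsilon_0$ for $t\in[0,h_\ell+\tau_\ell)$, $\hat B_d(t) = \max_{\ell\leqslant i\leqslant n}\{\epsilon_0,\ \theta B_d(i)+(1-\theta)\}$ for $t\in[h_n+\tau_n, h_{n+1}+\tau_{n+1})$, $n\geqslant \ell$; $\hat B_f(t) = \epsilon_0$ for $t\in[0,h_\ell)$, $\hat B_f(t) = \max_{\ell\leqslant i\leqslant n}\{\epsilon_0,\ B_f(i)/\theta\}$ for $t\in[h_n,h_{n+1})$, $n\geqslant\ell$. *)

theory Defs
  imports "HOL-Analysis.Analysis" "HOL-Library.Extended_Nat"
begin

text \<open>A DoS sequence is given by its number of elements M (possibly infinite, M = \<infinity>)
  and real sequences h, tau indexed from 1; only indices n with 1 \<le> n \<le> M are elements.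
  Indices beyond M correspond to the convention h_n = h_n + tau_n = +\<infinity>.\<close>

definition dos_valid :: "enat \<Rightarrow> nat \<Rightarrow> bool" where
  "dos_valid M n \<longleftrightarrow> 1 \<le> n \<and> enat n \<le> M"

definition dos_sequence :: "enat \<Rightarrow> (nat \<Rightarrow> real) \<Rightarrow> (nat \<Rightarrow> real) \<Rightarrow> bool" where
  "dos_sequence M h \<tau> \<longleftrightarrow>
     (dos_valid M 1 \<longrightarrow> 0 \<le> h 1) \<and>
     (\<forall>n. dos_valid M n \<longrightarrow> 0 \<le> \<tau> n) \<and>
     (\<forall>n. dos_valid M n \<and> dos_valid M (n + 1) \<longrightarrow> h n + \<tau> n < h (n + 1))"

definition dos_H :: "(nat \<Rightarrow> real) \<Rightarrow> (nat \<Rightarrow> real) \<Rightarrow> nat \<Rightarrow> real set" where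
  "dos_H h \<tau> n = {h n} \<union> {h n ..< h n + \<tau> n}"

definition dos_Xi :: "enat \<Rightarrow> (nat \<Rightarrow> real) \<Rightarrow> (nat \<Rightarrow> real) \<Rightarrow> real \<Rightarrow> real \<Rightarrow> real set" where
  "dos_Xi M h \<tau> a b = (\<Union>n\<in>{n. dos_valid M n}. dos_H h \<tau> n) \<inter> {a..b}"

definition dos_count_set :: "enat \<Rightarrow> (nat \<Rightarrow> real) \<Rightarrow> real \<Rightarrow> real \<Rightarrow> real set" where
  "dos_count_set M h a b = {h n | n. dos_valid M n} \<inter> {a..b}"

definition duration_bound :: "enat \<Rightarrow> (nat \<Rightarrow> real) \<Rightarrow> (nat \<Rightarrow> real) \<Rightarrow> real \<Rightarrow> bool" where
  "duration_bound M h \<tau> B \<longleftrightarrow> 0 \<le> B \<and> B \<le> 1 \<and>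
     (\<exists>\<kappa>>0. \<forall>t\<ge>0. measure lebesgue (dos_Xi M h \<tau> 0 t) \<le> \<kappa> + B * t)"

text \<open>A finite frequency bound; the cardinality inequality is required with the
  counted set finite (an infinite count never satisfies a finite bound).\<close>
definition frequency_bound :: "enat \<Rightarrow> (nat \<Rightarrow> real) \<Rightarrow> real \<Rightarrow> bool" where
  "frequency_bound M h B \<longleftrightarrow> 0 \<le> B \<and>
     (\<exists>\<Lambda>::nat. 0 < \<Lambda> \<and> (\<forall>t\<ge>0. finite (dos_count_set M h 0 t) \<and>
        real (card (dos_count_set M h 0 t)) \<le> real \<Lambda> + B * t))"

text \<open>Edge case: (i) inf D = 1, (ii) inf F = +\<infinity> (i.e. no finite frequency bound),
  (iii) durations unbounded.\<close>
definition dos_edge_case :: "enat \<Rightarrow> (nat \<Rightarrow> real) \<Rightarrow> (nat \<Rightarrow> real) \<Rightarrow> bool" where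
  "dos_edge_case M h \<tau> \<longleftrightarrow>
     Inf {B. duration_bound M h \<tau> B} = 1 \<or>
     \<not> (\<exists>B. frequency_bound M h B) \<or>
     (\<forall>\<Gamma>>0. \<exists>n. dos_valid M n \<and> \<tau> n > \<Gamma>)"

definition dos_period :: "enat \<Rightarrow> (nat \<Rightarrow> real) \<Rightarrow> (nat \<Rightarrow> real) \<Rightarrow> nat \<Rightarrow> real \<Rightarrow> bool" where
  "dos_period M h \<tau> n t \<longleftrightarrow> dos_valid M n \<and> h n + \<tau> n \<le> t \<and>
     (dos_valid M (n + 1) \<longrightarrow> t < h (n + 1) + \<tau> (n + 1))"

definition dos_hperiod :: "enat \<Rightarrow> (nat \<Rightarrow> real) \<Rightarrow> nat \<Rightarrow> real \<Rightarrow> bool" where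
  "dos_hperiod M h n t \<longleftrightarrow> dos_valid M n \<and> h n \<le> t \<and>
     (dos_valid M (n + 1) \<longrightarrow> t < h (n + 1))"

definition dos_before_end :: "enat \<Rightarrow> (nat \<Rightarrow> real) \<Rightarrow> (nat \<Rightarrow> real) \<Rightarrow> nat \<Rightarrow> real \<Rightarrow> bool" where
  "dos_before_end M h \<tau> n t \<longleftrightarrow> 0 \<le> t \<and> (dos_valid M n \<longrightarrow> t < h n + \<tau> n)"

definition dos_before_start :: "enat \<Rightarrow> (nat \<Rightarrow> real) \<Rightarrow> nat \<Rightarrow> real \<Rightarrow> bool" where
  "dos_before_start M h n t \<longleftrightarrow> 0 \<le> t \<and> (dos_valid M n \<longrightarrow> t < h n)"

definition est_Bd_i :: "enat \<Rightarrow> (nat \<Rightarrow> real) \<Rightarrow> (nat \<Rightarrow> real) \<Rightarrow> nat \<Rightarrow> real" where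
  "est_Bd_i M h \<tau> i = measure lebesgue (dos_Xi M h \<tau> 0 (h i + \<tau> i)) / (h i + \<tau> i)"

definition est_Bf_i :: "(nat \<Rightarrow> real) \<Rightarrow> nat \<Rightarrow> real" where
  "est_Bf_i h i = real i / h i"

definition est_Bd :: "nat \<Rightarrow> real \<Rightarrow> real \<Rightarrow> enat \<Rightarrow> (nat \<Rightarrow> real) \<Rightarrow> (nat \<Rightarrow> real) \<Rightarrow> real \<Rightarrow> real" where
  "est_Bd ell \<epsilon>0 \<theta> M h \<tau> t =
     (if dos_before_end M h \<tau> ell t then \<epsilon>0
      else (let n = (THE n. ell \<le> n \<and> dos_period M h \<tau> n t) in
        max \<epsilon>0 (Max ((\<lambda>i. \<theta> * est_Bd_i M h \<tau> i + (1 - \<theta>)) ` {ell..n}))))"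

definition est_Bf :: "nat \<Rightarrow> real \<Rightarrow> real \<Rightarrow> enat \<Rightarrow> (nat \<Rightarrow> real) \<Rightarrow> real \<Rightarrow> real" where
  "est_Bf ell \<epsilon>0 \<theta> M h t =
     (if dos_before_start M h ell t then \<epsilon>0
      else (let n = (THE n. ell \<le> n \<and> dos_hperiod M h n t) in
        max \<epsilon>0 (Max ((\<lambda>i. est_Bf_i h i / \<theta>) ` {ell..n}))))"

definition graph_laplacian :: "real^'n^'n \<Rightarrow> bool" where
  "graph_laplacian L \<longleftrightarrow> (\<forall>i j. i \<noteq> j \<longrightarrow> L $ i $ j \<le> 0) \<and> (\<forall>i. (\<Sum>j\<in>UNIV. L $ i $ j) = 0)"

definition symmetric_matrix :: "real^'n^'n \<Rightarrow> bool" where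
  "symmetric_matrix L \<longleftrightarrow> transpose L = L"

text \<open>Irreducible: no nonempty proper index set is closed (no permutation to block triangular form).\<close>
definition irreducible_matrix :: "real^'n^'n \<Rightarrow> bool" where
  "irreducible_matrix L \<longleftrightarrow>
     (\<forall>S. S \<noteq> {} \<and> S \<noteq> UNIV \<longrightarrow> (\<exists>i\<in>S. \<exists>j. j \<notin> S \<and> L $ i $ j \<noteq> 0))"

definition lambda_max :: "real^'n^'n \<Rightarrow> real" where
  "lambda_max L = Max {\<mu>. \<exists>v. v \<noteq> 0 \<and> L *v v = \<mu> *\<^sub>R v}"

end

theory Submission
  imports Defs
begin

lemma valid_mono: "dos_valid M n \<Longrightarrow> 1 \<le> k \<Longrightarrow> k \<le> n \<Longrightarrow> dos_valid M k"
  unfolding dos_valid_def by (meson enat_ord_simps(1) order_trans)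

lemma h_strict_aux:
  assumes "dos_sequence M h \<tau>" "1 \<le> i" "dos_valid M (i + 1 + d)"
  shows "h i + \<tau> i < h (i + 1 + d)"
  using assms(3)
proof (induction d)
  case 0
  then have "dos_valid M i" using valid_mono assms(2) by fastforce
  then show ?case using 0 assms(1) unfolding dos_sequence_def by auto
next
  case (Suc d)
  have v: "dos_valid M (i + 1 + d)" using Suc.prems valid_mono by fastforce
  have "0 \<le> \<tau> (i + 1 + d)" using v assms(1) unfolding dos_sequence_def by auto
  moreover have "h (i+1+d) + \<tau> (i+1+d) < h (i+1+d+1)" using v Suc.prems assms(1) unfolding dos_sequence_def
    by auto
  ultimately show ?case using Suc.IH[OF v] by auto
qed

lemma h_strict:
  assumes "dos_sequence M h \<tau>" "1 \<le> i" "i < j" "dos_valid M j"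
  shows "h i + \<tau> i < h j"
proof -
  define d where "d = j - i - 1"
  have "j = i + 1 + d" using assms(3) unfolding d_def by simp
  then show ?thesis using h_strict_aux assms by blast
qed

lemma tau_nonneg: "dos_sequence M h \<tau> \<Longrightarrow> dos_valid M i \<Longrightarrow> 0 \<le> \<tau> i"
  unfolding dos_sequence_def by auto

lemma valid_ge1: "dos_valid M i \<Longrightarrow> 1 \<le> i" unfolding dos_valid_def by auto

lemma h_nonneg:
  assumes "dos_sequence M h \<tau>" "dos_valid M i" shows "0 \<le> h i"
proof (cases "i = 1")
  case True then show ?thesis using assms unfolding dos_sequence_def by auto
next
  case False
  then have "1 < i" using valid_ge1[OF assms(2)] by auto
  then have "h 1 + \<tau> 1 < h i" using h_strict assms by auto
  moreover have "dos_valid M 1" using valid_mono assms(2) \<open>1 < i\<close> by auto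
  ultimately show ?thesis using assms(1) unfolding dos_sequence_def by force
qed

lemma h_pos:
  assumes "dos_sequence M h \<tau>" "dos_valid M i" "2 \<le> i" shows "0 < h i"
proof -
  have "h 1 + \<tau> 1 < h i" using h_strict assms by auto
  moreover have "dos_valid M 1" using valid_mono assms by auto
  ultimately show ?thesis using assms(1) h_nonneg tau_nonneg by force
qed

lemma hT_mono:
  assumes "dos_sequence M h \<tau>" "dos_valid M j" "1 \<le> i" "i \<le> j"
  shows "h i + \<tau> i \<le> h j + \<tau> j"
proof (cases "i = j")
  case False
  then show ?thesis using h_strict[OF assms(1,3) _ assms(2)] assms tau_nonneg[OF assms(1,2)] by force
qed auto

lemma h_mono:
  assumes "dos_sequence M h \<tau>" "dos_valid M j" "1 \<le> i" "i \<le> j"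
  shows "h i \<le> h j"
proof (cases "i = j")
  case False
  then show ?thesis using h_strict[OF assms(1,3) _ assms(2)] assms tau_nonneg[OF assms(1)] valid_mono by force
qed auto

lemma Xi_sets: "dos_Xi M h \<tau> a b \<in> sets lebesgue"
  unfolding dos_Xi_def dos_H_def by (intro sets.Int sets.countable_UN' sets.Un) auto

lemma Xi_sub: "dos_Xi M h \<tau> a b \<subseteq> {a..b}"
  unfolding dos_Xi_def by auto

lemma Xi_lmeas: "dos_Xi M h \<tau> a b \<in> lmeasurable"
  by (rule bounded_set_imp_lmeasurable[OF bounded_subset[OF _ Xi_sub] Xi_sets]) auto

lemma meas_Icc: "a \<le> b \<Longrightarrow> measure lebesgue {a..(b::real)} = b - a"
  by simp

lemma Xi_le: assumes "0 \<le> b" shows "measure lebesgue (dos_Xi M h \<tau> 0 b) \<le> b"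
proof -
  have "measure lebesgue (dos_Xi M h \<tau> 0 b) \<le> measure lebesgue {0..b}"
    by (rule measure_mono_fmeasurable[OF Xi_sub Xi_sets lmeasurable_interval(1)])
  then show ?thesis using assms by simp
qed

lemma Xi_mono_meas: "dos_Xi M h \<tau> 0 b \<subseteq> dos_Xi M h \<tau> 0 b' \<Longrightarrow>
   measure lebesgue (dos_Xi M h \<tau> 0 b) \<le> measure lebesgue (dos_Xi M h \<tau> 0 b')"
  using measure_mono_fmeasurable[OF _ Xi_sets Xi_lmeas] by blast

definition freqP :: "enat \<Rightarrow> (nat \<Rightarrow> real) \<Rightarrow> real \<Rightarrow> real \<Rightarrow> bool" where
  "freqP M h L B \<longleftrightarrow> 0 \<le> B \<and> (\<forall>t\<ge>0. finite (dos_count_set M h 0 t) \<and>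
        real (card (dos_count_set M h 0 t)) \<le> L + B * t)"

lemma h_inj:
  assumes "dos_sequence M h \<tau>" shows "inj_on h {n. dos_valid M n}"
proof (rule inj_onI)
  fix x y assume "x \<in> {n. dos_valid M n}" "y \<in> {n. dos_valid M n}" "h x = h y"
  moreover have "\<And>x y. dos_valid M x \<Longrightarrow> dos_valid M y \<Longrightarrow> x < y \<Longrightarrow> h x < h y"
    using h_strict[OF assms] valid_ge1 tau_nonneg[OF assms] by (smt (verit))
  ultimately show "x = y" by (metis mem_Collect_eq nat_neq_iff order_less_irrefl)
qed

lemma finite_J:
  assumes "dos_sequence M h \<tau>" "freqP M h L B"
  shows "finite {n. dos_valid M n \<and> h n \<le> t}"
proof (cases "t \<ge> 0")
  case True
  have "h ` {n. dos_valid M n \<and> h n \<le> t} \<subseteq> dos_count_set M h 0 t"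
    unfolding dos_count_set_def using h_nonneg[OF assms(1)] by auto
  then have "finite (h ` {n. dos_valid M n \<and> h n \<le> t})"
    using assms(2) True unfolding freqP_def by (meson finite_subset)
  moreover have "inj_on h {n. dos_valid M n \<and> h n \<le> t}"
    using h_inj[OF assms(1)] by (rule inj_on_subset) auto
  ultimately show ?thesis using finite_imageD by blast
next
  case False
  then have "{n. dos_valid M n \<and> h n \<le> t} = {}" using h_nonneg[OF assms(1)] by force
  then show ?thesis by (metis finite.emptyI)
qed

lemma count_ge:
  assumes "dos_sequence M h \<tau>" "freqP M h L B" "dos_valid M n"
  shows "real n \<le> L + B * h n"
proof -
  have sub: "h ` {1..n} \<subseteq> dos_count_set M h 0 (h n)"
    unfolding dos_count_set_def using h_nonneg[OF assms(1)] h_mono[OF assms(1,3)] valid_mono[OF assms(3)]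
    by force
  have inj: "inj_on h {1..n}"
    using h_inj[OF assms(1)] by (rule inj_on_subset) (use valid_mono[OF assms(3)] in auto)
  have fin: "finite (dos_count_set M h 0 (h n))" and cb: "real (card (dos_count_set M h 0 (h n))) \<le> L + B * h n"
    using assms(2) h_nonneg[OF assms(1,3)] unfolding freqP_def by auto
  have "n = card (h ` {1..n})" using card_image[OF inj] by simp
  also have "\<dots> \<le> card (dos_count_set M h 0 (h n))" by (rule card_mono[OF fin sub])
  finally show ?thesis using cb by linarith
qed

lemma period_exists:
  assumes "dos_sequence M h \<tau>" "freqP M h L B" "dos_valid M 1" "h 1 + \<tau> 1 \<le> t"
  shows "\<exists>n\<ge>1. dos_period M h \<tau> n t"
proof -
  let ?S = "{n. dos_valid M n \<and> h n + \<tau> n \<le> t}"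
  have "?S \<subseteq> {n. dos_valid M n \<and> h n \<le> t}" using tau_nonneg[OF assms(1)] by force
  then have fin: "finite ?S" using finite_J[OF assms(1,2)] finite_subset by blast
  have "1 \<in> ?S" using assms by auto
  define n where "n = Max ?S"
  have nS: "n \<in> ?S" unfolding n_def using fin \<open>1 \<in> ?S\<close> Max_in by blast
  have "\<not> (dos_valid M (n+1) \<and> h (n+1) + \<tau> (n+1) \<le> t)"
  proof
    assume "dos_valid M (n+1) \<and> h (n+1) + \<tau> (n+1) \<le> t"
    then have "n + 1 \<in> ?S" by auto
    then have "n + 1 \<le> n" unfolding n_def using fin Max_ge by blast
    then show False by simp
  qed
  then have "dos_period M h \<tau> n t" using nS unfolding dos_period_def by auto
  then show ?thesis using nS valid_ge1 by blast
qed

lemma period_unique_aux: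
  assumes "dos_sequence M h \<tau>" "dos_period M h \<tau> n t" "dos_period M h \<tau> n' t" "n < n'"
  shows False
proof -
  have v: "dos_valid M n'" "dos_valid M n" using assms unfolding dos_period_def by auto
  have "dos_valid M (n+1)" using valid_mono[OF v(1)] assms(4) by auto
  then have "t < h (n+1) + \<tau> (n+1)" using assms(2) unfolding dos_period_def by auto
  moreover have "h (n+1) + \<tau> (n+1) \<le> h n' + \<tau> n'" using hT_mono[OF assms(1) v(1)] assms(4) by auto
  moreover have "h n' + \<tau> n' \<le> t" using assms(3) unfolding dos_period_def by auto
  ultimately show False by simp
qed

lemma period_unique:
  assumes "dos_sequence M h \<tau>" "dos_period M h \<tau> n t" "dos_period M h \<tau> n' t"
  shows "n = n'"
  using period_unique_aux[OF assms(1,2,3)] period_unique_aux[OF assms(1,3,2)] by (meson nat_neq_iff)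

lemma hperiod_unique_aux:
  assumes "dos_sequence M h \<tau>" "dos_hperiod M h n t" "dos_hperiod M h n' t" "n < n'"
  shows False
proof -
  have v: "dos_valid M n'" "dos_valid M n" using assms unfolding dos_hperiod_def by auto
  have "dos_valid M (n+1)" using valid_mono[OF v(1)] assms(4) by auto
  then have "t < h (n+1)" using assms(2) unfolding dos_hperiod_def by auto
  moreover have "h (n+1) \<le> h n'" using h_mono[OF assms(1) v(1)] assms(4) by auto
  moreover have "h n' \<le> t" using assms(3) unfolding dos_hperiod_def by auto
  ultimately show False by simp
qed

lemma hperiod_unique:
  assumes "dos_sequence M h \<tau>" "dos_hperiod M h n t" "dos_hperiod M h n' t"
  shows "n = n'"
  using hperiod_unique_aux[OF assms(1,2,3)] hperiod_unique_aux[OF assms(1,3,2)] by (meson nat_neq_iff)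

lemma period_self:
  assumes "dos_sequence M h \<tau>" "dos_valid M n"
  shows "dos_period M h \<tau> n (h n + \<tau> n)"
  unfolding dos_period_def using assms h_strict[OF assms(1) valid_ge1[OF assms(2)], of "n+1"]
    tau_nonneg[OF assms(1), of "n+1"] by force

lemma hperiod_self:
  assumes "dos_sequence M h \<tau>" "dos_valid M n"
  shows "dos_hperiod M h n (h n)"
  unfolding dos_hperiod_def using assms h_strict[OF assms(1) valid_ge1[OF assms(2)], of "n+1"]
    tau_nonneg[OF assms(1), of n] by force

lemma est_Bd_late:
  assumes "dos_sequence M h \<tau>" "dos_valid M n" "ell \<le> n" "1 \<le> ell"
  shows "est_Bd ell \<epsilon>0 \<theta> M h \<tau> (h n + \<tau> n) =
     max \<epsilon>0 (Max ((\<lambda>i. \<theta> * est_Bd_i M h \<tau> i + (1 - \<theta>)) ` {ell..n}))"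
proof -
  have ve: "dos_valid M ell" using valid_mono[OF assms(2,4,3)] .
  have nb: "\<not> dos_before_end M h \<tau> ell (h n + \<tau> n)"
    unfolding dos_before_end_def using ve hT_mono[OF assms(1,2,4,3)] by auto
  have "(THE n'. ell \<le> n' \<and> dos_period M h \<tau> n' (h n + \<tau> n)) = n"
    by (rule the_equality) (use assms period_self period_unique in blast)+
  then show ?thesis unfolding est_Bd_def using nb by simp
qed

lemma est_Bd_early:
  assumes "dos_sequence M h \<tau>" "dos_valid M n" "\<not> (dos_valid M ell \<and> ell \<le> n)"
  shows "est_Bd ell \<epsilon>0 \<theta> M h \<tau> (h n + \<tau> n) = \<epsilon>0"
proof -
  have "dos_before_end M h \<tau> ell (h n + \<tau> n)"
    unfolding dos_before_end_def
    using assms h_nonneg[OF assms(1,2)] tau_nonneg[OF assms(1,2)]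
      h_strict[OF assms(1) valid_ge1[OF assms(2)], of ell] tau_nonneg[OF assms(1), of ell] by force
  then show ?thesis unfolding est_Bd_def by simp
qed

lemma est_Bf_late:
  assumes "dos_sequence M h \<tau>" "dos_valid M n" "ell \<le> n" "1 \<le> ell"
  shows "est_Bf ell \<epsilon>0 \<theta> M h (h n) =
     max \<epsilon>0 (Max ((\<lambda>i. est_Bf_i h i / \<theta>) ` {ell..n}))"
proof -
  have ve: "dos_valid M ell" using valid_mono[OF assms(2,4,3)] .
  have nb: "\<not> dos_before_start M h ell (h n)"
    unfolding dos_before_start_def using ve h_mono[OF assms(1,2,4,3)] by auto
  have "(THE n'. ell \<le> n' \<and> dos_hperiod M h n' (h n)) = n"
    by (rule the_equality) (use assms hperiod_self hperiod_unique in blast)+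
  then show ?thesis unfolding est_Bf_def using nb by simp
qed

lemma est_Bf_early:
  assumes "dos_sequence M h \<tau>" "dos_valid M n" "\<not> (dos_valid M ell \<and> ell \<le> n)"
  shows "est_Bf ell \<epsilon>0 \<theta> M h (h n) = \<epsilon>0"
proof -
  have "dos_before_start M h ell (h n)"
    unfolding dos_before_start_def
    using assms h_nonneg[OF assms(1,2)] 
      h_strict[OF assms(1) valid_ge1[OF assms(2)], of ell] tau_nonneg[OF assms(1,2)] by force
  then show ?thesis unfolding est_Bf_def by simp
qed

lemma H_bounds:
  assumes "dos_sequence M h \<tau>" "dos_valid M n" "x \<in> dos_H h \<tau> n"
  shows "h n \<le> x \<and> x \<le> h n + \<tau> n"
  using assms tau_nonneg[OF assms(1,2)] unfolding dos_H_def by auto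

lemma Xi_cover:
  assumes "dos_sequence M h \<tau>" "freqP M h L B" "0 \<le> t"
  shows "dos_Xi M h \<tau> 0 t = {} \<or>
    (\<exists>j. dos_valid M j \<and> h j \<le> t \<and> dos_Xi M h \<tau> 0 t \<subseteq> dos_Xi M h \<tau> 0 (h j + \<tau> j))"
proof (cases "{n. dos_valid M n \<and> h n \<le> t} = {}")
  case True
  have "dos_Xi M h \<tau> 0 t = {}"
  proof (rule ccontr)
    assume "dos_Xi M h \<tau> 0 t \<noteq> {}"
    then obtain x n where "dos_valid M n" "x \<in> dos_H h \<tau> n" "x \<le> t" unfolding dos_Xi_def by auto
    then show False using True H_bounds[OF assms(1)] by fastforce
  qed
  then show ?thesis by simp
next
  case False
  define j where "j = Max {n. dos_valid M n \<and> h n \<le> t}"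
  have fin: "finite {n. dos_valid M n \<and> h n \<le> t}" using finite_J[OF assms(1,2)] .
  have jJ: "dos_valid M j" "h j \<le> t" using Max_in[OF fin False] unfolding j_def by auto
  have "dos_Xi M h \<tau> 0 t \<subseteq> dos_Xi M h \<tau> 0 (h j + \<tau> j)"
  proof
    fix x assume x: "x \<in> dos_Xi M h \<tau> 0 t"
    then obtain n where n: "dos_valid M n" "x \<in> dos_H h \<tau> n" "0 \<le> x" "x \<le> t" unfolding dos_Xi_def by auto
    have hb: "h n \<le> x" "x \<le> h n + \<tau> n" using H_bounds[OF assms(1) n(1,2)] by auto
    then have "n \<le> j" unfolding j_def using fin n by (intro Max_ge) auto
    then have "h n + \<tau> n \<le> h j + \<tau> j" using hT_mono[OF assms(1) jJ(1) valid_ge1[OF n(1)]] by auto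
    then show "x \<in> dos_Xi M h \<tau> 0 (h j + \<tau> j)" using n hb unfolding dos_Xi_def by auto
  qed
  then show ?thesis using jJ by blast
qed

lemma dur_generic:
  assumes "dos_sequence M h \<tau>" "freqP M h L B" "\<forall>j. dos_valid M j \<longrightarrow> \<tau> j \<le> \<Gamma>" "0 \<le> \<Gamma>"
    "0 \<le> S" "S \<le> 1" "\<forall>j. dos_valid M j \<and> ell \<le> j \<longrightarrow> est_Bd_i M h \<tau> j \<le> S" "2 \<le> ell"
  shows "duration_bound M h \<tau> S"
proof -
  define C where "C = (\<Sum>i<ell. \<bar>h i\<bar> + \<bar>\<tau> i\<bar>)"
  have C0: "0 \<le> C" unfolding C_def by (auto intro: sum_nonneg)
  have main: "measure lebesgue (dos_Xi M h \<tau> 0 t) \<le> (C + \<Gamma> + 1) + S * t" if t: "0 \<le> t" for t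
  proof -
    from Xi_cover[OF assms(1,2) t] show ?thesis
    proof
      assume "dos_Xi M h \<tau> 0 t = {}"
      then show ?thesis using C0 assms(4,5) t by simp
    next
      assume "\<exists>j. dos_valid M j \<and> h j \<le> t \<and> dos_Xi M h \<tau> 0 t \<subseteq> dos_Xi M h \<tau> 0 (h j + \<tau> j)"
      then obtain j where j: "dos_valid M j" "h j \<le> t" "dos_Xi M h \<tau> 0 t \<subseteq> dos_Xi M h \<tau> 0 (h j + \<tau> j)"
        by blast
      define b where "b = h j + \<tau> j"
      have b0: "0 \<le> b" unfolding b_def using h_nonneg[OF assms(1) j(1)] tau_nonneg[OF assms(1) j(1)] by simp
      have bt: "b \<le> t + \<Gamma>" unfolding b_def using j assms(3) by force
      have m1: "measure lebesgue (dos_Xi M h \<tau> 0 t) \<le> measure lebesgue (dos_Xi M h \<tau> 0 b)"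
        using Xi_mono_meas[OF j(3)] unfolding b_def .
      show ?thesis
      proof (cases "ell \<le> j")
        case True
        have bpos: "0 < b" unfolding b_def using h_pos[OF assms(1) j(1)] True assms(8) tau_nonneg[OF assms(1) j(1)] by simp
        have "measure lebesgue (dos_Xi M h \<tau> 0 b) = est_Bd_i M h \<tau> j * b"
          unfolding est_Bd_i_def b_def using bpos b_def by simp
        also have "\<dots> \<le> S * b" using assms(7) j(1) True bpos by (simp add: mult_right_mono)
        also have "\<dots> \<le> S * (t + \<Gamma>)" using bt assms(5) by (simp add: mult_left_mono)
        also have "\<dots> \<le> S * t + \<Gamma>" using assms(4,5,6) by (simp add: distrib_left mult_left_le_one_le)
        finally show ?thesis using m1 C0 by linarith
      next
        case False
        have "measure lebesgue (dos_Xi M h \<tau> 0 b) \<le> b" using Xi_le[OF b0] .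
        also have "b \<le> \<bar>h j\<bar> + \<bar>\<tau> j\<bar>" unfolding b_def by simp
        also have "\<dots> \<le> C" unfolding C_def
          by (rule member_le_sum[where f="\<lambda>i. \<bar>h i\<bar> + \<bar>\<tau> i\<bar>"]) (use False in auto)
        finally show ?thesis using m1 assms(4,5) t by (smt (verit) mult_nonneg_nonneg)
      qed
    qed
  qed
  have "0 < C + \<Gamma> + 1" using C0 assms(4) by simp
  then show ?thesis unfolding duration_bound_def using main assms(5,6) by blast
qed

lemma freq_generic:
  assumes "dos_sequence M h \<tau>" "freqP M h L B"
    "0 \<le> S" "\<forall>j. dos_valid M j \<and> ell \<le> j \<longrightarrow> est_Bf_i h j \<le> S" "2 \<le> ell"
  shows "frequency_bound M h S"
proof -
  have main: "finite (dos_count_set M h 0 t) \<and> real (card (dos_count_set M h 0 t)) \<le> real ell + S * t"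
    if t: "0 \<le> t" for t
  proof -
    let ?J = "{n. dos_valid M n \<and> h n \<le> t}"
    have fin: "finite (dos_count_set M h 0 t)" using assms(2) t unfolding freqP_def by auto
    have eq: "dos_count_set M h 0 t = h ` ?J"
      unfolding dos_count_set_def using h_nonneg[OF assms(1)] by auto
    have finJ: "finite ?J" using finite_J[OF assms(1,2)] .
    have cle: "card (dos_count_set M h 0 t) \<le> card ?J" unfolding eq by (rule card_image_le[OF finJ])
    have "real (card ?J) \<le> real ell + S * t"
    proof (cases "?J = {}")
      case True show ?thesis unfolding True using assms(3) t by simp
    next
      case False
      define j where "j = Max ?J"
      have jJ: "dos_valid M j" "h j \<le> t" using Max_in[OF finJ False] unfolding j_def by auto
      have "?J \<subseteq> {1..j}" unfolding j_def using finJ valid_ge1 by auto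
      then have cj: "card ?J \<le> j" using card_mono[of "{1..j}" ?J] by simp
      show ?thesis
      proof (cases "ell \<le> j")
        case True
        have hp: "0 < h j" using h_pos[OF assms(1) jJ(1)] True assms(5) by simp
        have "real j = est_Bf_i h j * h j" unfolding est_Bf_i_def using hp by simp
        also have "\<dots> \<le> S * h j" using assms(4) jJ(1) True hp by (simp add: mult_right_mono)
        also have "\<dots> \<le> S * t" using jJ(2) assms(3) by (simp add: mult_left_mono)
        finally show ?thesis using cj by linarith
      next
        case False
        have "real (card ?J) \<le> real ell" using cj False by simp
        moreover have "0 \<le> S * t" using assms(3) t by simp
        ultimately show ?thesis by linarith
      qed
    qed
    then show ?thesis using fin cle by linarith
  qed
  have "(0::nat) < ell" using assms(5) by simp
  then show ?thesis unfolding frequency_bound_def using main assms(3) by blast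
qed

lemma Xi_gap:
  assumes "dos_sequence M h \<tau>" "dos_valid M 2" "h 2 \<le> b"
  shows "measure lebesgue (dos_Xi M h \<tau> 0 b) \<le> b - (h 2 - (h 1 + \<tau> 1))"
proof -
  have v1: "dos_valid M 1" using valid_mono[OF assms(2)] by auto
  have c0: "0 \<le> h 1 + \<tau> 1" using h_nonneg[OF assms(1) v1] tau_nonneg[OF assms(1) v1] by simp
  have cd: "h 1 + \<tau> 1 < h 2" using h_strict[OF assms(1), of 1 2] assms(2) by simp
  have sub: "dos_Xi M h \<tau> 0 b \<subseteq> {0..b} - {h 1 + \<tau> 1<..<h 2}"
  proof
    fix x assume x: "x \<in> dos_Xi M h \<tau> 0 b"
    then obtain n where n: "dos_valid M n" "x \<in> dos_H h \<tau> n" "0 \<le> x" "x \<le> b" unfolding dos_Xi_def by auto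
    have hb: "h n \<le> x" "x \<le> h n + \<tau> n" using H_bounds[OF assms(1) n(1,2)] by auto
    have "\<not> (h 1 + \<tau> 1 < x \<and> x < h 2)"
    proof (cases "n = 1")
      case True then show ?thesis using hb by auto
    next
      case False
      then have "2 \<le> n" using valid_ge1[OF n(1)] by auto
      then have "h 2 \<le> h n" using h_mono[OF assms(1) n(1)] by auto
      then show ?thesis using hb by auto
    qed
    then show "x \<in> {0..b} - {h 1 + \<tau> 1<..<h 2}" using n by auto
  qed
  have "measure lebesgue ({0..b} - {h 1 + \<tau> 1<..<h 2}) = measure lebesgue {0..b} - measure lebesgue {h 1 + \<tau> 1<..<h 2}"
    by (rule measure_Diff) (use c0 cd assms(3) in \<open>auto simp: fmeasurable_def\<close>)
  also have "\<dots> = b - (h 2 - (h 1 + \<tau> 1))" using c0 cd assms(3) by simp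
  finally have eq: "measure lebesgue ({0..b} - {h 1 + \<tau> 1<..<h 2}) = b - (h 2 - (h 1 + \<tau> 1))" .
  have "measure lebesgue (dos_Xi M h \<tau> 0 b) \<le> measure lebesgue ({0..b} - {h 1 + \<tau> 1<..<h 2})"
    by (rule measure_mono_fmeasurable[OF sub Xi_sets]) (auto intro: fmeasurable_Diff)
  then show ?thesis using eq by simp
qed

lemma Bd_U:
  assumes "dos_sequence M h \<tau>" "dos_valid M 2" "B1 < 1" "0 < \<kappa>1"
    "\<forall>t\<ge>0. measure lebesgue (dos_Xi M h \<tau> 0 t) \<le> \<kappa>1 + B1 * t"
  shows "\<exists>U<1. \<forall>i. dos_valid M i \<and> 2 \<le> i \<longrightarrow> est_Bd_i M h \<tau> i \<le> U"
proof -
  define g where "g = h 2 - (h 1 + \<tau> 1)"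
  have g0: "0 < g" unfolding g_def using h_strict[OF assms(1), of 1 2] assms(2) by simp
  define X0 where "X0 = 2 * \<kappa>1 / (1 - B1)"
  have X0: "0 < X0" unfolding X0_def using assms(3,4) by simp
  define U where "U = max (1 - g / X0) ((1 + B1) / 2)"
  have U1: "U < 1" unfolding U_def using g0 X0 assms(3) by simp
  have "est_Bd_i M h \<tau> i \<le> U" if i: "dos_valid M i" "2 \<le> i" for i
  proof -
    define x where "x = h i + \<tau> i"
    have hx: "h 2 \<le> x" unfolding x_def using h_mono[OF assms(1) i(1), of 2] i tau_nonneg[OF assms(1) i(1)] by simp
    have xpos: "0 < x" using hx h_pos[OF assms(1) assms(2)] by simp
    define m where "m = measure lebesgue (dos_Xi M h \<tau> 0 x)"
    have m1: "m \<le> x - g" unfolding m_def g_def using Xi_gap[OF assms(1,2) hx] .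
    have m2: "m \<le> \<kappa>1 + B1 * x" unfolding m_def using assms(5) xpos by simp
    have e: "est_Bd_i M h \<tau> i = m / x" unfolding est_Bd_i_def m_def x_def by simp
    show ?thesis
    proof (cases "x \<le> X0")
      case True
      have "m / x \<le> (x - g) / x" using m1 xpos by (simp add: divide_right_mono)
      also have "\<dots> = 1 - g / x" using xpos by (simp add: field_simps)
      also have "\<dots> \<le> 1 - g / X0" using True xpos g0 by (simp add: frac_le)
      finally show ?thesis unfolding e U_def by simp
    next
      case False
      have "m / x \<le> (\<kappa>1 + B1 * x) / x" using m2 xpos by (simp add: divide_right_mono)
      also have "\<dots> = B1 + \<kappa>1 / x" using xpos by (simp add: field_simps)
      finally have a: "m / x \<le> B1 + \<kappa>1 / x" .
      have b: "\<kappa>1 / x \<le> \<kappa>1 / X0" using False X0 assms(4) by (simp add: frac_le)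
      have c: "\<kappa>1 / X0 = (1 - B1) / 2" unfolding X0_def using assms(3,4) by simp
      from a b c have "m / x \<le> (1 + B1) / 2" by argo
      then show ?thesis unfolding e U_def by (metis max.coboundedI2)
    qed
  qed
  then show ?thesis using U1 by blast
qed

lemma Bf_U:
  assumes "dos_sequence M h \<tau>" "freqP M h L B" "dos_valid M 2" "0 \<le> L"
  shows "\<forall>i. dos_valid M i \<and> 2 \<le> i \<longrightarrow> est_Bf_i h i \<le> L / h 2 + B"
proof (intro allI impI)
  fix i assume i: "dos_valid M i \<and> 2 \<le> i"
  have h2: "0 < h 2" using h_pos[OF assms(1,3)] by simp
  have hi: "h 2 \<le> h i" using h_mono[OF assms(1)] i by auto
  have "real i \<le> L + B * h i" using count_ge[OF assms(1,2)] i by blast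
  then have "est_Bf_i h i \<le> (L + B * h i) / h i" unfolding est_Bf_i_def using h2 hi
    by (simp add: divide_right_mono)
  also have "\<dots> = L / h i + B" using h2 hi by (simp add: field_simps)
  also have "L / h i \<le> L / h 2" using h2 hi assms(4) by (simp add: frac_le)
  finally show "est_Bf_i h i \<le> L / h 2 + B" by simp
qed

lemma final_ineq:
  fixes a Sf c \<eta> R :: real
  assumes "0 < a" "0 < Sf" "0 \<le> c" "c < 1" "\<eta> = (1 - c) / 4 * min a Sf"
    "R = c * (a + \<eta>) / (Sf - \<eta>)"
  shows "Sf * R < a" "0 < Sf - \<eta>"
proof -
  define e where "e = (1 - c) / 4"
  have e0: "0 < e" "e < 1" using assms(3,4) unfolding e_def by auto
  have h1: "\<eta> \<le> e * a" "\<eta> \<le> e * Sf" unfolding assms(5) e_def[symmetric] using e0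
    by (auto intro: mult_left_mono)
  have h0: "0 < \<eta>" unfolding assms(5) using assms(1,2,4) by simp
  have p: "0 < (1 - c) * (3 - c)" using assms(3,4) by (intro mult_pos_pos) auto
  have pe: "(1 - c) * (3 - c) = 3 - 4 * c + c * c" by (simp add: algebra_simps)
  have ce: "c * (1 + e) < 1 - e" unfolding e_def using p pe by (simp add: field_simps)
  show sp: "0 < Sf - \<eta>" using h1 e0 assms(2) by (smt (verit) mult_less_cancel_right2)
  have "c * (a + \<eta>) * Sf \<le> c * (a * (1 + e)) * Sf"
    using h1 assms(2,3) by (intro mult_right_mono mult_left_mono) (auto simp: algebra_simps)
  also have "\<dots> = (c * (1 + e)) * (a * Sf)" by (simp add: algebra_simps)
  also have "\<dots> < (1 - e) * (a * Sf)" using ce assms(1,2) by (intro mult_strict_right_mono) auto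
  also have "\<dots> = a * (Sf - e * Sf)" by (simp add: algebra_simps)
  also have "\<dots> \<le> a * (Sf - \<eta>)" using h1 assms(1) by (intro mult_left_mono) auto
  finally have "c * (a + \<eta>) * Sf < a * (Sf - \<eta>)" .
  then show "Sf * R < a" unfolding assms(6) using sp by (simp add: field_simps)
qed

lemma lemma4_aux:
  fixes M :: enat and h \<tau> :: "nat \<Rightarrow> real" and L :: "real^'n^'n"
    and ell :: nat and \<epsilon>0 \<theta> \<gamma>1 \<Delta>0 :: real and t \<Delta> :: "nat \<Rightarrow> real"
  assumes dos: "dos_sequence M h \<tau>"
    and not_edge: "\<not> dos_edge_case M h \<tau>"
    and lap: "graph_laplacian L" "symmetric_matrix L" "irreducible_matrix L"
    and est: "2 \<le> ell" "0 < \<epsilon>0" "\<epsilon>0 < 1" "0 < \<theta>" "\<theta> < 1"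
    and gam: "1 < \<gamma>1"
    and D0: "0 < \<Delta>0" "\<bar>1 - \<Delta>0 * lambda_max L\<bar> < 1"
    and t1: "t 1 = 0"
    and trec: "\<forall>k\<ge>1. t (k + 1) = t k + \<Delta> k"
    and step_init: "\<forall>k\<ge>1. dos_before_end M h \<tau> 1 (t k) \<longrightarrow> \<Delta> k = \<Delta>0"
    and step_per: "\<forall>k\<ge>1. \<forall>n\<ge>1. dos_period M h \<tau> n (t k) \<longrightarrow>
        \<Delta> k = min \<Delta>0 ((1 - est_Bd ell \<epsilon>0 \<theta> M h \<tau> (h n + \<tau> n))
                          / (\<gamma>1 * est_Bf ell \<epsilon>0 \<theta> M h (h n)))"
  shows "\<exists>tc Dl Db Bd Bf. 0 \<le> tc \<and> 0 < Dl \<and>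
           duration_bound M h \<tau> Bd \<and> frequency_bound M h Bf \<and>
           (\<forall>k\<ge>1. 0 \<le> t k \<longrightarrow> Dl \<le> \<Delta> k) \<and>
           (\<forall>k\<ge>1. tc \<le> t k \<longrightarrow> \<Delta> k \<le> Db) \<and>
           \<bar>1 - Db * lambda_max L\<bar> < 1 \<and> Bd + Bf * Db < 1"
proof -
  define eBd where "eBd n = est_Bd ell \<epsilon>0 \<theta> M h \<tau> (h n + \<tau> n)" for n
  define eBf where "eBf n = est_Bf ell \<epsilon>0 \<theta> M h (h n)" for n
  define F where "F n = min \<Delta>0 ((1 - eBd n) / (\<gamma>1 * eBf n))" for n
  from not_edge obtain B0 where "frequency_bound M h B0" unfolding dos_edge_case_def by blast
  then obtain \<Lambda>0 :: nat where fP: "freqP M h (real \<Lambda>0) B0"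
    unfolding frequency_bound_def freqP_def by blast
  have B0: "0 \<le> B0" using fP unfolding freqP_def by simp
  from not_edge obtain \<Gamma> where \<Gamma>: "\<Gamma> > 0" "\<forall>n. dos_valid M n \<longrightarrow> \<tau> n \<le> \<Gamma>"
    unfolding dos_edge_case_def by (auto simp: not_less)
  have "0 < \<Delta>0 * lambda_max L" using D0(2) by linarith
  then have lampos: "0 < lambda_max L" using D0(1) by (simp add: zero_less_mult_iff)
  have Dbgood: "\<bar>1 - Db * lambda_max L\<bar> < 1" if "0 < Db" "Db \<le> \<Delta>0" for Db
  proof -
    have "0 < Db * lambda_max L" using that lampos by simp
    moreover have "Db * lambda_max L \<le> \<Delta>0 * lambda_max L" using that lampos by (simp add: mult_right_mono)
    moreover have "\<Delta>0 * lambda_max L < 2" using D0(2) by linarith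
    ultimately show ?thesis by linarith
  qed
  have late: "\<exists>n. dos_valid M n \<and> dos_period M h \<tau> n (t k) \<and> \<Delta> k = F n"
    if k: "1 \<le> k" "dos_valid M 1" "h 1 + \<tau> 1 \<le> t k" for k
  proof -
    obtain n where n: "n \<ge> 1" "dos_period M h \<tau> n (t k)" using period_exists[OF dos fP k(2,3)] by blast
    then show ?thesis using step_per k(1) unfolding F_def eBd_def eBf_def dos_period_def by blast
  qed
  have cases: "\<Delta> k = \<Delta>0 \<or> (\<exists>n. dos_valid M n \<and> \<Delta> k = F n)" if k: "1 \<le> k" "0 \<le> t k" for k
  proof (cases "dos_before_end M h \<tau> 1 (t k)")
    case True then show ?thesis using step_init k by blast
  next
    case False
    then have "dos_valid M 1" "h 1 + \<tau> 1 \<le> t k" using k unfolding dos_before_end_def by auto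
    then show ?thesis using late k by blast
  qed
  have leD0: "\<Delta> k \<le> \<Delta>0" if "1 \<le> k" "0 \<le> t k" for k
    using cases[OF that] unfolding F_def by auto
  have lowgen: "\<forall>k\<ge>1. 0 \<le> t k \<longrightarrow> min \<Delta>0 ((1 - Ud) / (\<gamma>1 * Uf)) \<le> \<Delta> k"
    if U: "Ud < 1" "\<forall>n. dos_valid M n \<longrightarrow> eBd n \<le> Ud \<and> \<epsilon>0 \<le> eBf n \<and> eBf n \<le> Uf" for Ud Uf
  proof (intro allI impI)
    fix k assume k: "1 \<le> k" "0 \<le> t k"
    from cases[OF k] show "min \<Delta>0 ((1 - Ud) / (\<gamma>1 * Uf)) \<le> \<Delta> k"
    proof
      assume "\<Delta> k = \<Delta>0" then show ?thesis by simp
    next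
      assume "\<exists>n. dos_valid M n \<and> \<Delta> k = F n"
      then obtain n where n: "dos_valid M n" "\<Delta> k = F n" by blast
      have b: "eBd n \<le> Ud" "\<epsilon>0 \<le> eBf n" "eBf n \<le> Uf" using U(2) n(1) by auto
      have "(1 - Ud) / (\<gamma>1 * Uf) \<le> (1 - eBd n) / (\<gamma>1 * eBf n)"
        by (rule frac_le) (use b U(1) est(2) gam in \<open>auto intro: mult_left_mono\<close>)
      then show ?thesis unfolding n(2) F_def by auto
    qed
  qed
  show ?thesis
  proof (cases "dos_valid M ell")
    case False
    have e: "eBd n = \<epsilon>0" "eBf n = \<epsilon>0" if "dos_valid M n" for n
      unfolding eBd_def eBf_def using est_Bd_early[OF dos that] est_Bf_early[OF dos that] False by auto
    have low: "\<forall>k\<ge>1. 0 \<le> t k \<longrightarrow> min \<Delta>0 ((1 - \<epsilon>0) / (\<gamma>1 * \<epsilon>0)) \<le> \<Delta> k"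
      by (rule lowgen) (use e est in auto)
    have Dl: "0 < min \<Delta>0 ((1 - \<epsilon>0) / (\<gamma>1 * \<epsilon>0))" using D0(1) est gam by simp
    have nov: "\<not> (dos_valid M j \<and> ell \<le> j)" for j using False valid_mono est(1) by fastforce
    have db: "duration_bound M h \<tau> 0"
      by (rule dur_generic[OF dos fP \<Gamma>(2)]) (use \<Gamma>(1) nov est(1) in auto)
    have fb: "frequency_bound M h 0"
      by (rule freq_generic[OF dos fP]) (use nov est(1) in auto)
    show ?thesis
      apply (rule exI[of _ 0], rule exI[of _ "min \<Delta>0 ((1 - \<epsilon>0) / (\<gamma>1 * \<epsilon>0))"], rule exI[of _ \<Delta>0],
          rule exI[of _ 0], rule exI[of _ 0])
      using Dl db fb low leD0 D0 Dbgood[OF D0(1) order_refl] by (intro conjI) auto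
  next
    case True
    note vell = True
    have v2: "dos_valid M 2" using valid_mono[OF vell] est(1) by auto
    have v1: "dos_valid M 1" using valid_mono[OF vell] est(1) by auto
    define D where "D = {B. duration_bound M h \<tau> B}"
    have one: "\<forall>t\<ge>0. measure lebesgue (dos_Xi M h \<tau> 0 t) \<le> 1 + 1 * t"
    proof (intro allI impI)
      fix t :: real assume "0 \<le> t"
      then have "measure lebesgue (dos_Xi M h \<tau> 0 t) \<le> t" by (rule Xi_le)
      then show "measure lebesgue (dos_Xi M h \<tau> 0 t) \<le> 1 + 1 * t" by simp
    qed
    have oneD: "1 \<in> D" unfolding D_def duration_bound_def
      using one by (intro CollectI conjI exI[of _ "1::real"]) auto
    have bddD: "bdd_below D" unfolding D_def duration_bound_def by (rule bdd_belowI[of _ 0]) auto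
    have "Inf D \<le> 1" using cInf_lower[OF oneD bddD] .
    moreover have "Inf D \<noteq> 1" using not_edge unfolding dos_edge_case_def D_def by auto
    ultimately have "Inf D < 1" by simp
    then obtain B1 where "B1 \<in> D" "B1 < 1" using cInf_lessD[of D 1] oneD by blast
    then obtain \<kappa>1 where B1: "B1 < 1" "0 < \<kappa>1" "\<forall>t\<ge>0. measure lebesgue (dos_Xi M h \<tau> 0 t) \<le> \<kappa>1 + B1 * t"
      unfolding D_def duration_bound_def by blast
    obtain U where U: "U < 1" "\<forall>i. dos_valid M i \<and> 2 \<le> i \<longrightarrow> est_Bd_i M h \<tau> i \<le> U"
      using Bd_U[OF dos v2 B1] by blast
    define Uf0 where "Uf0 = real \<Lambda>0 / h 2 + B0"
    have Uf0: "\<forall>i. dos_valid M i \<and> 2 \<le> i \<longrightarrow> est_Bf_i h i \<le> Uf0"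
      unfolding Uf0_def using Bf_U[OF dos fP v2] by simp
    define Ud where "Ud = max \<epsilon>0 (\<theta> * U + (1 - \<theta>))"
    define Uf where "Uf = max \<epsilon>0 (Uf0 / \<theta>)"
    have "\<theta> * U < \<theta>" using U(1) est(4) by simp
    then have Ud1: "Ud < 1" unfolding Ud_def using est by simp
    have bnds: "\<forall>n. dos_valid M n \<longrightarrow> eBd n \<le> Ud \<and> \<epsilon>0 \<le> eBf n \<and> eBf n \<le> Uf"
    proof (intro allI impI)
      fix n assume vn: "dos_valid M n"
      show "eBd n \<le> Ud \<and> \<epsilon>0 \<le> eBf n \<and> eBf n \<le> Uf"
      proof (cases "ell \<le> n")
        case False
        then show ?thesis unfolding eBd_def eBf_def Ud_def Uf_def
          using est_Bd_early[OF dos vn] est_Bf_early[OF dos vn] by auto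
      next
        case True
        have ell1: "1 \<le> ell" using est(1) by simp
        have iv: "dos_valid M i \<and> 2 \<le> i" if "i \<in> {ell..n}" for i
          using that valid_mono[OF vn, of i] est(1) by auto
        have m1: "Max ((\<lambda>i. \<theta> * est_Bd_i M h \<tau> i + (1 - \<theta>)) ` {ell..n}) \<le> \<theta> * U + (1 - \<theta>)"
          using True iv U(2) est(4) by (subst Max_le_iff) (auto intro: mult_left_mono)
        have m2: "Max ((\<lambda>i. est_Bf_i h i / \<theta>) ` {ell..n}) \<le> Uf0 / \<theta>"
          using True iv Uf0 est(4) by (subst Max_le_iff) (auto intro: divide_right_mono)
        show ?thesis unfolding eBd_def eBf_def Ud_def Uf_def
          using est_Bd_late[OF dos vn True ell1] est_Bf_late[OF dos vn True ell1] m1 m2 by auto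
      qed
    qed
    define Dl where "Dl = min \<Delta>0 ((1 - Ud) / (\<gamma>1 * Uf))"
    have Dl0: "0 < Dl" unfolding Dl_def Uf_def using Ud1 D0(1) est gam by auto
    have low: "\<forall>k\<ge>1. 0 \<le> t k \<longrightarrow> Dl \<le> \<Delta> k" unfolding Dl_def by (rule lowgen[OF Ud1 bnds])
    define I where "I = {i. dos_valid M i \<and> ell \<le> i}"
    have ellI: "ell \<in> I" unfolding I_def using vell by simp
    have I2: "dos_valid M i \<and> 2 \<le> i" if "i \<in> I" for i using that est(1) unfolding I_def by auto
    have bddBd: "bdd_above (est_Bd_i M h \<tau> ` I)" by (rule bdd_aboveI2[of _ _ U]) (use I2 U(2) in auto)
    have bddBf: "bdd_above (est_Bf_i h ` I)" by (rule bdd_aboveI2[of _ _ Uf0]) (use I2 Uf0 in auto)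
    define Sd where "Sd = Sup (est_Bd_i M h \<tau> ` I)"
    define Sf where "Sf = Sup (est_Bf_i h ` I)"
    have Sd_up: "est_Bd_i M h \<tau> i \<le> Sd" if "i \<in> I" for i unfolding Sd_def by (rule cSup_upper[OF imageI[OF that] bddBd])
    have Sf_up: "est_Bf_i h i \<le> Sf" if "i \<in> I" for i unfolding Sf_def by (rule cSup_upper[OF imageI[OF that] bddBf])
    have SdU: "Sd \<le> U" unfolding Sd_def by (rule cSup_least) (use ellI I2 U(2) in auto)
    have hell: "0 < h ell" using h_pos[OF dos vell est(1)] .
    have "0 \<le> est_Bd_i M h \<tau> ell" unfolding est_Bd_i_def
      using hell tau_nonneg[OF dos vell] by (intro divide_nonneg_nonneg) auto
    then have Sd0: "0 \<le> Sd" using Sd_up[OF ellI] by simp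
    have "0 < est_Bf_i h ell" unfolding est_Bf_i_def using hell est(1) by simp
    then have Sf0: "0 < Sf" using Sf_up[OF ellI] by simp
    define a where "a = 1 - Sd"
    have a0: "0 < a" unfolding a_def using SdU U(1) by simp
    define c where "c = \<theta> * \<theta> / \<gamma>1"
    have "\<theta> * \<theta> < \<theta> * 1" using est(4,5) by (intro mult_strict_left_mono) auto
    then have "\<theta> * \<theta> < 1" using est(5) by linarith
    then have c1: "c < 1" unfolding c_def using gam by simp
    have c0: "0 < c" unfolding c_def using est(4) gam by simp
    define \<eta> where "\<eta> = (1 - c) / 4 * min a Sf"
    define R where "R = c * (a + \<eta>) / (Sf - \<eta>)"
    have fin: "Sf * R < a" "0 < Sf - \<eta>"
      using final_ineq[OF a0 Sf0 less_imp_le[OF c0] c1 \<eta>_def R_def] by auto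
    have \<eta>0: "0 < \<eta>" unfolding \<eta>_def using c1 a0 Sf0 by simp
    have "Sd - \<eta> < Sd" using \<eta>0 by simp
    then have "\<exists>x\<in>est_Bd_i M h \<tau> ` I. Sd - \<eta> < x"
      unfolding Sd_def using ellI by (intro less_cSupD) auto
    then obtain i1 where i1: "i1 \<in> I" "Sd - \<eta> < est_Bd_i M h \<tau> i1" by blast
    have "Sf - \<eta> < Sf" using \<eta>0 by simp
    then have "\<exists>x\<in>est_Bf_i h ` I. Sf - \<eta> < x"
      unfolding Sf_def using ellI by (intro less_cSupD) auto
    then obtain i2 where i2: "i2 \<in> I" "Sf - \<eta> < est_Bf_i h i2" by blast
    define n0 where "n0 = max i1 i2"
    have vn0: "dos_valid M n0" unfolding n0_def using i1(1) i2(1) unfolding I_def by (simp add: max_def)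
    define tc where "tc = h n0 + \<tau> n0"
    have tc0: "0 \<le> tc" unfolding tc_def using h_nonneg[OF dos vn0] tau_nonneg[OF dos vn0] by simp
    have R0: "0 < R" unfolding R_def using c0 a0 \<eta>0 fin(2) by simp
    define Db where "Db = min \<Delta>0 R"
    have Db0: "0 < Db" "Db \<le> \<Delta>0" unfolding Db_def using R0 D0(1) by auto
    have "Sf * Db \<le> Sf * R" unfolding Db_def using Sf0 by (simp add: mult_left_mono)
    then have final: "Sd + Sf * Db < 1" using fin(1) unfolding a_def by linarith
    have db: "duration_bound M h \<tau> Sd"
      by (rule dur_generic[OF dos fP \<Gamma>(2)]) (use \<Gamma>(1) Sd0 SdU U(1) Sd_up est(1) in \<open>auto simp: I_def\<close>)
    have fb: "frequency_bound M h Sf"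
      by (rule freq_generic[OF dos fP]) (use Sf0 Sf_up est(1) in \<open>auto simp: I_def\<close>)
    have up: "\<forall>k\<ge>1. tc \<le> t k \<longrightarrow> \<Delta> k \<le> Db"
    proof (intro allI impI)
      fix k assume k: "1 \<le> k" "tc \<le> t k"
      have "h 1 + \<tau> 1 \<le> tc" unfolding tc_def using hT_mono[OF dos vn0] valid_ge1[OF vn0] by simp
      then obtain n where n: "dos_valid M n" "dos_period M h \<tau> n (t k)" "\<Delta> k = F n"
        using late[OF k(1) v1] k(2) by auto
      have nn0: "n0 \<le> n"
      proof (rule ccontr)
        assume "\<not> n0 \<le> n"
        then have "n < n0" by simp
        then have "dos_valid M (n+1)" using valid_mono[OF vn0] by auto
        then have "t k < h (n+1) + \<tau> (n+1)" using n(2) unfolding dos_period_def by auto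
        moreover have "h (n+1) + \<tau> (n+1) \<le> tc" unfolding tc_def using hT_mono[OF dos vn0] \<open>n < n0\<close> by simp
        ultimately show False using k(2) by simp
      qed
      have elln: "ell \<le> n" "1 \<le> ell" using nn0 i1(1) est(1) unfolding n0_def I_def by auto
      have i1n: "i1 \<in> {ell..n}" using i1(1) nn0 unfolding I_def n0_def by auto
      have i2n: "i2 \<in> {ell..n}" using i2(1) nn0 unfolding I_def n0_def by auto
      have e1: "\<theta> * est_Bd_i M h \<tau> i1 + (1 - \<theta>) \<le> eBd n"
        unfolding eBd_def est_Bd_late[OF dos n(1) elln]
        using i1n by (intro max.coboundedI2 Max_ge) auto
      have e2: "est_Bf_i h i2 / \<theta> \<le> eBf n"
        unfolding eBf_def est_Bf_late[OF dos n(1) elln]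
        using i2n by (intro max.coboundedI2 Max_ge) auto
      have eb: "eBd n < 1" using bnds n(1) Ud1 by force
      have num: "1 - eBd n \<le> \<theta> * (a + \<eta>)"
      proof -
        have "1 - eBd n \<le> \<theta> * (1 - est_Bd_i M h \<tau> i1)" using e1 by (simp add: algebra_simps)
        also have "\<dots> \<le> \<theta> * (a + \<eta>)" using i1(2) est(4) unfolding a_def by (intro mult_left_mono) auto
        finally show ?thesis .
      qed
      have den: "\<gamma>1 * ((Sf - \<eta>) / \<theta>) \<le> \<gamma>1 * eBf n"
      proof -
        have "(Sf - \<eta>) / \<theta> \<le> est_Bf_i h i2 / \<theta>" using i2(2) est(4) by (simp add: divide_right_mono)
        then show ?thesis using e2 gam by (intro mult_left_mono) auto
      qed
      have dpos: "0 < \<gamma>1 * ((Sf - \<eta>) / \<theta>)" using fin(2) est(4) gam by simp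
      have "(1 - eBd n) / (\<gamma>1 * eBf n) \<le> (\<theta> * (a + \<eta>)) / (\<gamma>1 * ((Sf - \<eta>) / \<theta>))"
        by (rule frac_le) (use num den dpos eb a0 \<eta>0 est(4) in auto)
      also have "\<dots> = R" unfolding R_def c_def using est(4) gam fin(2) by (simp add: field_simps)
      finally show "\<Delta> k \<le> Db" unfolding n(3) F_def Db_def by auto
    qed
    show ?thesis
      apply (rule exI[of _ tc], rule exI[of _ Dl], rule exI[of _ Db], rule exI[of _ Sd], rule exI[of _ Sf])
      by (intro conjI tc0 Dl0 db fb low up Dbgood[OF Db0] final)
  qed
qed

theorem lemma4:
  fixes M :: enat and h \<tau> :: "nat \<Rightarrow> real" and L :: "real^'n^'n"
    and ell :: nat and \<epsilon>0 \<theta> \<gamma>1 \<Delta>0 :: real and t \<Delta> :: "nat \<Rightarrow> real"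
  assumes dos: "dos_sequence M h \<tau>"
    and not_edge: "\<not> dos_edge_case M h \<tau>"
    and lap: "graph_laplacian L" "symmetric_matrix L" "irreducible_matrix L"
    and est: "2 \<le> ell" "0 < \<epsilon>0" "\<epsilon>0 < 1" "0 < \<theta>" "\<theta> < 1"
    and gam: "1 < \<gamma>1"
    and D0: "0 < \<Delta>0" "\<bar>1 - \<Delta>0 * lambda_max L\<bar> < 1"
    and t1: "t 1 = 0"
    and trec: "\<forall>k\<ge>1. t (k + 1) = t k + \<Delta> k"
    and step_init: "\<forall>k\<ge>1. dos_before_end M h \<tau> 1 (t k) \<longrightarrow> \<Delta> k = \<Delta>0"
    and step_per: "\<forall>k\<ge>1. \<forall>n\<ge>1. dos_period M h \<tau> n (t k) \<longrightarrow>
        \<Delta> k = min \<Delta>0 ((1 - est_Bd ell \<epsilon>0 \<theta> M h \<tau> (h n + \<tau> n))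
                          / (\<gamma>1 * est_Bf ell \<epsilon>0 \<theta> M h (h n)))"
  shows "\<exists>tc Dl Db Bd Bf. 0 \<le> tc \<and> 0 < Dl \<and>
           duration_bound M h \<tau> Bd \<and> frequency_bound M h Bf \<and>
           (\<forall>k\<ge>1. 0 \<le> t k \<longrightarrow> Dl \<le> \<Delta> k) \<and>
           (\<forall>k\<ge>1. tc \<le> t k \<longrightarrow> \<Delta> k \<le> Db) \<and>
           \<bar>1 - Db * lambda_max L\<bar> < 1 \<and> Bd + Bf * Db < 1"
  using assms by (rule lemma4_aux)

thm_deps lemma4

end
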